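(* Let $p,q$ satisfy $\frac1p+\frac1q=1$, and let $(\hat f(j,k))_{(j,k)\in\mathbb{Z}^2}\in \ell^q(\mathbb{Z}^2)$. Define, for $(j,k)\in\mathbb{Z}^2$ with $2j\neq\pm k$, $\hat u(j,k)=\frac{\hat f(j,k)}{4j^2-k^2}$, and let \[ u(x,t)=\sum_{(j,k)\in\mathbb{Z}^2,\ 2j\neq \pm k}\hat u(j,k)e^{2ijx+ikt}. \] Then $u\in C^{\gamma}$ for every $\gamma$ with $0<\gamma<1-\frac1p$.
   Context: $\ell^q=\{(\hat u(j,k))_{(j,k)\in\mathbb{Z}^2}:\sum_{(j,k)}|\hat u(j,k)|^q<\infty\}$. $C^\gamma$ denotes the space of $\gamma$-Hölder continuous functions of $(x,t)$, $\pi$-periodic in $x$ and $2\pi$-periodic in $t$. *)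

theory Defs
  imports "HOL-Analysis.Analysis"
begin

definition in_ellq :: "real \<Rightarrow> (int \<times> int \<Rightarrow> complex) \<Rightarrow> bool" where
  "in_ellq q a \<longleftrightarrow> (\<lambda>jk. norm (a jk) powr q) summable_on UNIV"

definition nonres :: "(int \<times> int) set" where
  "nonres = {(j, k). 2 * j \<noteq> k \<and> 2 * j \<noteq> - k}"

definition uhat :: "(int \<times> int \<Rightarrow> complex) \<Rightarrow> int \<times> int \<Rightarrow> complex" where
  "uhat f jk = f jk / of_int (4 * (fst jk)^2 - (snd jk)^2)"

definition useries :: "(int \<times> int \<Rightarrow> complex) \<Rightarrow> real \<Rightarrow> real \<Rightarrow> complex" where
  "useries f x t = (\<Sum>\<^sub>\<infinity>jk\<in>nonres. uhat f jk *
      exp (\<i> * of_real (2 * of_int (fst jk) * x + of_int (snd jk) * t)))"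

definition holder_periodic :: "real \<Rightarrow> (real \<Rightarrow> real \<Rightarrow> complex) \<Rightarrow> bool" where
  "holder_periodic \<gamma> u \<longleftrightarrow>
     (\<forall>x t. u (x + pi) t = u x t \<and> u x (t + 2 * pi) = u x t) \<and>
     (\<exists>C. \<forall>x t x' t'. norm (u x t - u x' t') \<le> C * (sqrt ((x - x')^2 + (t - t')^2)) powr \<gamma>)"

end

theory Submission
  imports Defs
begin

lemma int_powr_summable:
  fixes s :: real assumes s: "s > 1"
  shows "(\<lambda>n::int. real_of_int \<bar>n\<bar> powr (-s)) summable_on (-{0})"
proof -
  have "summable (\<lambda>n. real n powr (-s))" using s by (simp add: summable_real_powr_iff)
  hence "summable (\<lambda>n. real (Suc n) powr (-s))" by (subst summable_Suc_iff)
  hence S: "(\<lambda>n. real (Suc n) powr (-s)) summable_on UNIV"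
    by (rule summable_nonneg_imp_summable_on) simp
  let ?g = "\<lambda>n::int. real_of_int \<bar>n\<bar> powr (-s)"
  have inj1: "inj_on (\<lambda>n::nat. int (Suc n)) UNIV" by (auto simp: inj_on_def)
  have inj2: "inj_on (\<lambda>n::nat. - int (Suc n)) UNIV" by (auto simp: inj_on_def)
  have A: "?g summable_on (range (\<lambda>n::nat. int (Suc n)))"
    using S by (subst summable_on_reindex[OF inj1]) (simp add: o_def add.commute)
  have B: "?g summable_on (range (\<lambda>n::nat. - int (Suc n)))"
    using S by (subst summable_on_reindex[OF inj2]) (simp add: o_def add.commute)
  have U: "-{0} = range (\<lambda>n::nat. int (Suc n)) \<union> range (\<lambda>n::nat. - int (Suc n))"
  proof (rule set_eqI)
    fix x :: int
    show "x \<in> -{0} \<longleftrightarrow> x \<in> range (\<lambda>n::nat. int (Suc n)) \<union> range (\<lambda>n::nat. - int (Suc n))"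
    proof
      assume "x \<in> -{0}"
      hence "x > 0 \<or> x < 0" by auto
      thus "x \<in> range (\<lambda>n::nat. int (Suc n)) \<union> range (\<lambda>n::nat. - int (Suc n))"
      proof
        assume "x > 0" hence "x = int (Suc (nat (x - 1)))" by simp
        thus ?thesis by blast
      next
        assume "x < 0" hence "x = - int (Suc (nat (-x - 1)))" by simp
        thus ?thesis by blast
      qed
    qed auto
  qed
  show ?thesis unfolding U by (rule summable_on_Un_disjoint[OF A B]) auto
qed

lemma prod_summable:
  fixes h :: "int \<Rightarrow> real"
  assumes h: "h summable_on A" and pos: "\<And>x. h x \<ge> 0"
  shows "(\<lambda>(a,b). h a * h b) summable_on (A \<times> A)"
proof -
  have "(\<lambda>x. norm ((\<lambda>(a,b). h a * h b) x)) summable_on (Sigma A (\<lambda>_. A))"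
  proof (rule Infinite_Sum.abs_summable_on_Sigma_iff[where f="\<lambda>(a,b). h a * h b" and A=A and B="\<lambda>_. A", THEN iffD2], intro conjI ballI)
    fix x assume "x \<in> A"
    show "(\<lambda>y. norm ((\<lambda>(a,b). h a * h b) (x, y))) summable_on A"
      using h pos by (simp add: abs_mult summable_on_cmult_right)
  next
    have eq: "\<And>x. (\<Sum>\<^sub>\<infinity>y\<in>A. norm ((\<lambda>(a,b). h a * h b) (x, y))) = h x * infsum h A"
      using pos by (simp add: abs_mult infsum_cmult_right h)
    show "(\<lambda>x. norm (infsum (\<lambda>y. norm ((\<lambda>(a,b). h a * h b) (x, y))) A)) summable_on A"
      unfolding eq using h pos by (simp add: abs_mult summable_on_cmult_left infsum_nonneg)
  qed
  hence "(\<lambda>x. norm ((\<lambda>(a,b). h a * h b) x)) summable_on (A \<times> A)" by simp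
  thus ?thesis by (rule abs_summable_summable)
qed

lemma key_ineq:
  fixes A B m g p :: real
  assumes A: "A \<ge> 1" and B: "B \<ge> 1" and m0: "0 \<le> m" and m: "m \<le> A + B"
    and g: "0 < g" "g < 1" and p: "p > 0"
  shows "(2 * m powr g / (A*B)) powr p \<le> (2*2 powr g) powr p * (A powr (-((1-g)*p)) * B powr (-((1-g)*p)))"
proof -
  have q1: "A*(B-1) \<ge> 0" "B*(A-1) \<ge> 0" using A B by simp_all
  have AB: "A*B \<ge> 1" using mult_mono[of 1 A 1 B] A B by simp
  have "m \<le> 2*(A*B)" using q1 m by (simp add: algebra_simps)
  hence "m powr g \<le> (2*(A*B)) powr g" using m0 g by (intro powr_mono2) auto
  also have "\<dots> = 2 powr g * (A*B) powr g" using AB by (simp add: powr_mult)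
  finally have 1: "2 * m powr g / (A*B) \<le> 2 * (2 powr g * (A*B) powr g) / (A*B)"
    using AB by (intro divide_right_mono) auto
  have "(A*B) powr g / (A*B) = (A*B) powr (g - 1)" using AB by (simp add: powr_diff)
  hence 2: "2 * (2 powr g * (A*B) powr g) / (A*B) = 2 * 2 powr g * (A*B) powr (g-1)"
    by (metis mult.assoc times_divide_eq_right)
  have "(2 * m powr g / (A*B)) powr p \<le> (2 * 2 powr g * (A*B) powr (g-1)) powr p"
    using 1 2 p m0 AB by (intro powr_mono2) auto
  also have "\<dots> = (2*2 powr g) powr p * ((A*B) powr (g-1)) powr p"
    using AB by (simp add: powr_mult)
  also have "((A*B) powr (g-1)) powr p = (A*B) powr (-((1-g)*p))"
    by (simp add: powr_powr algebra_simps)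
  also have "\<dots> = A powr (-((1-g)*p)) * B powr (-((1-g)*p))"
    using A B by (simp add: powr_mult)
  finally show ?thesis .
qed

definition wt :: "real \<Rightarrow> int\<times>int \<Rightarrow> real" where
  "wt g jk = 2 * real_of_int (2*\<bar>fst jk\<bar> + \<bar>snd jk\<bar>) powr g / real_of_int \<bar>4*(fst jk)^2 - (snd jk)^2\<bar>"

lemma wt_summable:
  fixes g p :: real
  assumes g: "0 < g" "g < 1" and p: "p > 0" and s: "(1-g)*p > 1"
  shows "(\<lambda>jk. wt g jk powr p) summable_on nonres"
proof -
  define s where "s = (1-g)*p"
  define h where "h = (\<lambda>n::int. real_of_int \<bar>n\<bar> powr (-s))"
  define H where "H = (\<lambda>(a,b). h a * h b)"
  define \<phi> where "\<phi> = (\<lambda>jk::int\<times>int. (2*fst jk - snd jk, 2*fst jk + snd jk))"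
  define K where "K = (2*2 powr g) powr p"
  have hs: "h summable_on (-{0})" unfolding h_def using s s_def int_powr_summable by simp
  have Hs: "H summable_on (-{0}) \<times> (-{0})" unfolding H_def
    by (rule prod_summable[OF hs]) (simp add: h_def)
  have inj: "inj_on \<phi> nonres" unfolding \<phi>_def inj_on_def by auto
  have img: "\<phi> ` nonres \<subseteq> (-{0}) \<times> (-{0})" unfolding \<phi>_def nonres_def by auto
  have "H summable_on \<phi> ` nonres" using Hs img by (rule summable_on_subset)
  hence "(H \<circ> \<phi>) summable_on nonres" using summable_on_reindex[OF inj, of H] by blast
  hence S: "(\<lambda>jk. K * (H \<circ> \<phi>) jk) summable_on nonres" by (rule summable_on_cmult_right)
  show ?thesis
  proof (rule summable_on_comparison_test[OF S])
    fix jk assume "jk \<in> nonres"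
    then obtain j k where jk: "jk = (j,k)" "2*j \<noteq> k" "2*j \<noteq> -k" unfolding nonres_def by auto
    define a where "a = 2*j - k"
    define b where "b = 2*j + k"
    have a1: "real_of_int \<bar>a\<bar> \<ge> 1" using jk a_def by simp
    have b1: "real_of_int \<bar>b\<bar> \<ge> 1" using jk b_def by simp
    have mle: "2*\<bar>j\<bar> + \<bar>k\<bar> \<le> \<bar>a\<bar> + \<bar>b\<bar>" unfolding a_def b_def by arith
    have D: "\<bar>4*j^2 - k^2\<bar> = \<bar>a\<bar> * \<bar>b\<bar>" unfolding a_def b_def
      by (simp add: abs_mult[symmetric] algebra_simps power2_eq_square)
    have Dr: "real_of_int \<bar>4*j^2 - k^2\<bar> = real_of_int \<bar>a\<bar> * real_of_int \<bar>b\<bar>"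
      using D by (metis of_int_mult)
    have "wt g jk powr p = (2 * real_of_int (2*\<bar>j\<bar> + \<bar>k\<bar>) powr g / (real_of_int \<bar>a\<bar> * real_of_int \<bar>b\<bar>)) powr p"
      unfolding wt_def jk fst_conv snd_conv Dr ..
    also have "\<dots> \<le> K * (real_of_int \<bar>a\<bar> powr (-s) * real_of_int \<bar>b\<bar> powr (-s))"
      unfolding K_def s_def
      by (rule key_ineq[OF a1 b1 _ _ g p]) (use mle in simp_all)
    also have "\<dots> = K * (H \<circ> \<phi>) jk" unfolding H_def h_def \<phi>_def jk a_def b_def by simp
    finally show "wt g jk powr p \<le> K * (H \<circ> \<phi>) jk" .
    show "0 \<le> wt g jk powr p" by simp
  qed
qed

lemma exp_diff_bound:
  fixes g a b :: real
  assumes g: "0 < g" "g < 1"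
  shows "norm (exp (\<i> * of_real a) - exp (\<i> * of_real b)) \<le> 2 * \<bar>a - b\<bar> powr g"
proof -
  define t where "t = a - b"
  have "exp (\<i> * of_real a) - exp (\<i> * of_real b) = exp (\<i> * of_real b) * (exp (\<i> * of_real t) - 1)"
    unfolding t_def by (simp add: algebra_simps exp_add[symmetric])
  hence "norm (exp (\<i> * of_real a) - exp (\<i> * of_real b)) = 2 * \<bar>sin (t/2)\<bar>"
    by (simp add: norm_mult dist_exp_i_1)
  also have "\<dots> \<le> 2 * \<bar>t\<bar> powr g"
  proof (cases "\<bar>t\<bar> \<ge> 1")
    case True
    have "\<bar>sin (t/2)\<bar> \<le> 1" by (rule abs_sin_le_one)
    moreover have "1 \<le> \<bar>t\<bar> powr g" using True g by (intro ge_one_powr_ge_zero) auto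
    ultimately show ?thesis by linarith
  next
    case False
    have "\<bar>sin (t/2)\<bar> \<le> \<bar>t/2\<bar>" by (rule abs_sin_x_le_abs_x)
    hence "2 * \<bar>sin (t/2)\<bar> \<le> \<bar>t\<bar>" by simp
    also have "\<bar>t\<bar> = \<bar>t\<bar> powr 1" by simp
    also have "\<dots> \<le> \<bar>t\<bar> powr g" using False g by (intro powr_mono') auto
    also have "\<dots> \<le> 2 * \<bar>t\<bar> powr g" by simp
    finally show ?thesis .
  qed
  finally show ?thesis unfolding t_def .
qed

definition Tm :: "(int \<times> int \<Rightarrow> complex) \<Rightarrow> real \<Rightarrow> real \<Rightarrow> int\<times>int \<Rightarrow> complex" where
  "Tm f x t jk = uhat f jk * exp (\<i> * of_real (2 * of_int (fst jk) * x + of_int (snd jk) * t))"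

lemma useries_Tm: "useries f x t = infsum (Tm f x t) nonres"
  unfolding useries_def Tm_def ..

lemma periodic_terms:
  "Tm f (x + pi) t jk = Tm f x t jk" "Tm f x (t + 2*pi) jk = Tm f x t jk"
proof -
  obtain j k where jk: "jk = (j,k)" by force
  have e1: "\<i> * of_real (2 * of_int j * (x + pi) + of_int k * t) =
        \<i> * of_real (2 * of_int j * x + of_int k * t) + (2 * complex_of_int j * pi) * \<i>"
    by (simp add: algebra_simps)
  have e2: "\<i> * of_real (2 * of_int j * x + of_int k * (t + 2*pi)) =
        \<i> * of_real (2 * of_int j * x + of_int k * t) + (2 * complex_of_int k * pi) * \<i>"
    by (simp add: algebra_simps)
  have z1: "exp ((2 * complex_of_int j * pi) * \<i>) = 1"
    by (subst exp_eq_1) (auto intro!: exI[of _ j])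
  have z2: "exp ((2 * complex_of_int k * pi) * \<i>) = 1"
    by (subst exp_eq_1) (auto intro!: exI[of _ k])
  show "Tm f (x + pi) t jk = Tm f x t jk"
    unfolding Tm_def jk fst_conv snd_conv e1 exp_add z1 by simp
  show "Tm f x (t + 2*pi) jk = Tm f x t jk"
    unfolding Tm_def jk fst_conv snd_conv e2 exp_add z2 by simp
qed

lemma wt_ge:
  assumes "jk \<in> nonres" "0 < g"
  shows "1 / real_of_int \<bar>4*(fst jk)^2 - (snd jk)^2\<bar> \<le> wt g jk"
proof -
  obtain j k where jk: "jk = (j,k)" "2*j \<noteq> k" "2*j \<noteq> -k" using assms unfolding nonres_def by auto
  have "2*\<bar>j\<bar> + \<bar>k\<bar> \<ge> 1" using jk by arith
  hence "1 \<le> real_of_int (2*\<bar>j\<bar> + \<bar>k\<bar>) powr g" using assms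
    by (intro ge_one_powr_ge_zero) (simp_all del: of_int_add of_int_mult of_int_abs)
  hence "1 \<le> 2 * real_of_int (2*\<bar>j\<bar> + \<bar>k\<bar>) powr g" by linarith
  thus ?thesis unfolding wt_def jk fst_conv snd_conv
    by (intro divide_right_mono) simp_all
qed

lemma norm_uhat: "norm (uhat f jk) = norm (f jk) / real_of_int \<bar>4*(fst jk)^2 - (snd jk)^2\<bar>"
proof -
  have n: "norm (complex_of_int z) = real_of_int \<bar>z\<bar>" for z by (metis norm_of_int of_int_abs)
  show ?thesis unfolding uhat_def norm_divide n ..
qed

lemma Tm_diff_bound:
  assumes "jk \<in> nonres" "0 < g" "g < 1"
  shows "norm (Tm f x t jk - Tm f x' t' jk) \<le> norm (f jk) * wt g jk * sqrt ((x - x')^2 + (t - t')^2) powr g"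
proof -
  obtain j k where jk: "jk = (j,k)" using assms unfolding nonres_def by auto
  define d where "d = sqrt ((x - x')^2 + (t - t')^2)"
  define m where "m = real_of_int (2*\<bar>j\<bar> + \<bar>k\<bar>)"
  define D where "D = real_of_int \<bar>4*j^2 - k^2\<bar>"
  have d0: "d \<ge> 0" unfolding d_def by simp
  have dx: "\<bar>x - x'\<bar> \<le> d" unfolding d_def by (metis real_sqrt_abs real_sqrt_le_mono le_add_same_cancel1 zero_le_power2)
  have dt: "\<bar>t - t'\<bar> \<le> d" unfolding d_def by (metis real_sqrt_abs real_sqrt_le_mono le_add_same_cancel2 zero_le_power2)
  have "\<bar>(2 * of_int j * x + of_int k * t) - (2 * of_int j * x' + of_int k * t')\<bar>
        = \<bar>2 * of_int j * (x - x') + of_int k * (t - t')\<bar>" by (simp add: algebra_simps)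
  also have "\<dots> \<le> 2 * \<bar>of_int j\<bar> * \<bar>x - x'\<bar> + \<bar>of_int k\<bar> * \<bar>t - t'\<bar>"
    using abs_triangle_ineq[of "2 * of_int j * (x - x')" "of_int k * (t - t')"] by (simp add: abs_mult)
  also have "\<dots> \<le> 2 * \<bar>of_int j\<bar> * d + \<bar>of_int k\<bar> * d"
    using dx dt by (intro add_mono mult_left_mono) auto
  also have "\<dots> = m * d" unfolding m_def by (simp add: algebra_simps)
  finally have th: "\<bar>(2 * of_int j * x + of_int k * t) - (2 * of_int j * x' + of_int k * t')\<bar> \<le> m * d" .
  have m0: "m \<ge> 0" unfolding m_def by simp
  have "norm (Tm f x t jk - Tm f x' t' jk) = norm (uhat f jk) *
     norm (exp (\<i> * of_real (2 * of_int j * x + of_int k * t)) - exp (\<i> * of_real (2 * of_int j * x' + of_int k * t')))"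
    unfolding Tm_def jk fst_conv snd_conv norm_mult[symmetric] right_diff_distrib ..
  also have "\<dots> \<le> norm (uhat f jk) * (2 * \<bar>(2 * of_int j * x + of_int k * t) - (2 * of_int j * x' + of_int k * t')\<bar> powr g)"
    using assms by (intro mult_left_mono exp_diff_bound) auto
  also have "\<dots> \<le> norm (uhat f jk) * (2 * (m * d) powr g)"
    using assms th by (intro mult_left_mono powr_mono2) auto
  also have "\<dots> = norm (f jk) * (2 * m powr g / D) * d powr g"
    unfolding norm_uhat jk fst_conv snd_conv D_def[symmetric] using m0 d0
    by (simp add: powr_mult mult_ac)
  also have "\<dots> = norm (f jk) * wt g jk * d powr g"
    unfolding wt_def jk fst_conv snd_conv m_def D_def ..
  finally show ?thesis unfolding d_def .
qed

theorem mainTheorem2: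
  fixes p q :: real and f :: "int \<times> int \<Rightarrow> complex"
  assumes "p > 1" and "q > 1" and "1 / p + 1 / q = 1"
    and "in_ellq q f"
  shows "\<forall>\<gamma>. 0 < \<gamma> \<and> \<gamma> < 1 - 1 / p \<longrightarrow> holder_periodic \<gamma> (useries f)"
proof (intro allI impI)
  fix g :: real assume gg: "0 < g \<and> g < 1 - 1 / p"
  have p: "p > 1" "q > 1" "1/p + 1/q = 1" using assms by auto
  have g0: "0 < g" using gg by simp
  have g1: "g < 1" using gg p by (smt (verit) divide_pos_pos)
  have "1/p < 1 - g" using gg by simp
  hence "1/p * p < (1 - g) * p" using p by (intro mult_strict_right_mono) auto
  hence s: "(1-g)*p > 1" using p by simp
  have wS: "(\<lambda>jk. wt g jk powr p) summable_on nonres"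
    using wt_summable[OF g0 g1 _ s] p by simp
  have fS: "(\<lambda>jk. norm (f jk) powr q) summable_on nonres"
    using assms(4) unfolding in_ellq_def by (rule summable_on_subset) simp
  define W where "W = (\<lambda>jk. norm (f jk) * wt g jk)"
  have wt0: "wt g jk \<ge> 0" for jk unfolding wt_def by simp
  have WS: "W summable_on nonres"
  proof (rule summable_on_comparison_test)
    show "(\<lambda>jk. (1/p) * wt g jk powr p + (1/q) * norm (f jk) powr q) summable_on nonres"
      by (intro summable_on_add summable_on_cmult_right wS fS)
    fix jk
    show "W jk \<le> (1/p) * wt g jk powr p + (1/q) * norm (f jk) powr q"
      unfolding W_def using Youngs_inequality[OF p, of "wt g jk" "norm (f jk)"] wt0[of jk]
      by (simp add: mult.commute)
    show "0 \<le> W jk" unfolding W_def using wt0[of jk] by simp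
  qed
  have TS: "Tm f x t summable_on nonres" for x t
  proof (rule abs_summable_summable)
    show "(\<lambda>jk. norm (Tm f x t jk)) summable_on nonres"
    proof (rule summable_on_comparison_test[OF WS])
      fix jk assume jk: "jk \<in> nonres"
      have "norm (Tm f x t jk) = norm (f jk) * (1 / real_of_int \<bar>4*(fst jk)^2 - (snd jk)^2\<bar>)"
        unfolding Tm_def norm_mult norm_uhat by simp
      also have "\<dots> \<le> W jk" unfolding W_def
        by (intro mult_left_mono wt_ge[OF jk g0]) simp
      finally show "norm (Tm f x t jk) \<le> W jk" .
    qed simp
  qed
  show "holder_periodic g (useries f)"
    unfolding holder_periodic_def
  proof (intro conjI allI exI)
    fix x t
    show "useries f (x + pi) t = useries f x t" unfolding useries_Tm periodic_terms ..
    show "useries f x (t + 2 * pi) = useries f x t" unfolding useries_Tm periodic_terms ..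
  next
    fix x t x' t'
    define d where "d = sqrt ((x - x')^2 + (t - t')^2) powr g"
    have h1: "(Tm f x t has_sum useries f x t) nonres" unfolding useries_Tm using TS by (rule has_sum_infsum)
    have h2: "((\<lambda>jk. - Tm f x' t' jk) has_sum (- useries f x' t')) nonres"
      unfolding useries_Tm using has_sum_infsum[OF TS] by (rule has_sum_uminusI)
    have h: "((\<lambda>jk. Tm f x t jk - Tm f x' t' jk) has_sum (useries f x t - useries f x' t')) nonres"
      using has_sum_add[OF h1 h2] by simp
    have hW: "((\<lambda>jk. W jk * d) has_sum (infsum W nonres * d)) nonres"
      using has_sum_infsum[OF WS] by (rule has_sum_cmult_left)
    show "norm (useries f x t - useries f x' t') \<le> infsum W nonres * sqrt ((x - x')^2 + (t - t')^2) powr g"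
      unfolding d_def[symmetric]
    proof (rule norm_infsum_le[OF h hW])
      fix jk assume "jk \<in> nonres"
      thus "norm (Tm f x t jk - Tm f x' t' jk) \<le> W jk * d"
        unfolding W_def d_def using Tm_diff_bound[of jk g f x t x' t'] g0 g1 by simp
    qed
  qed
qed

end
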